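(* Let $\{X_k\},\{V_k\},\{\mu_k\}$ be generated by the SMPG algorithm with $\bar\mu=0$. Then the index set $\mathbb{K}=\{k\in\mathbb{N}:\|V_k\|_{\mathrm F}\le\mu_k^2\}$ is infinite; consequently $\mu_k\downarrow 0$.
   Context: Setting. $1\le r<d$, $\mathcal{O}^{d,r}=\{X\in\mathbb{R}^{d\times r}:X^\top X=I_r\}$, $\mathcal{T}_X\mathcal{O}^{d,r}=\{D:X^\top D+D^\top X=0\}$. Consider $\min_{X\in\mathcal{O}^{d,r}}f(X)=u(X)+s(X)+w(X)$, where $u:\mathbb{R}^{d\times r}\to\mathbb{R}$ is continuously differentiable with $L_u$-Lipschitz gradient; $s:\mathbb{R}^{d\times r}\to\mathbb{R}$ is convex and $L_s$-Lipschitz; $w(X)=2\rho\|(I_d-XX^\top)\Sigma_\circ^{1/2}\|_{\mathrm F}$ with $\Sigma_\circ\in\mathbb{S}_+^d$, $\rho>0$. Smoothing: $\tilde w(X,\mu)=w(X)$ if $w(X)\ge\mu\rho$, $\tilde w(X,\mu)=\frac{w(X)^2}{2\mu\rho}+\frac{\mu\rho}{2}$ otherwise; $\tilde g(X,\mu)=u(X)+\tilde w(X,\mu)$, $\tilde f(X,\mu)=\tilde g(X,\mu)+s(X)$; $\nabla$ is the Euclidean gradient in $X$. A retraction is a smooth map $\mathfrak{R}$ on the tangent bundle of $\mathcal{O}^{d,r}$ with $\mathfrak{R}_X(0)=X$ and $\mathrm{D}\mathfrak{R}_X(0)=\mathrm{id}$ on $\mathcal{T}_X\mathcal{O}^{d,r}$.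 SMPG algorithm: inputs $X_0\in\mathcal{O}^{d,r}$, $\mu_0>0$, $\bar\mu\in[0,\mu_0]$, $\theta\in(0,1)$, $\beta\in(0,1)$. For $k=0,1,\dots$: compute $V_k=\arg\min_{V\in\mathcal{T}_{X_k}\mathcal{O}^{d,r}}\langle\nabla\tilde g(X_k,\mu_k),V\rangle+\frac{1}{2\mu_k}\|V\|_{\mathrm F}^2+s(X_k+V)$; if $\|V_k\|_{\mathrm F}\le\bar\mu^2$ and $\mu_k\le\bar\mu$, stop and return $X_k$; otherwise set $\alpha_k=\beta^{m_k}$ with $m_k$ the smallest nonnegative integer such that $\tilde f(\mathfrak{R}_{X_k}(\beta^{m_k}V_k),\mu_k)\le\tilde f(X_k,\mu_k)-\frac{\beta^{m_k}}{2\mu_k}\|V_k\|_{\mathrm F}^2$, set $X_{k+1}=\mathfrak{R}_{X_k}(\alpha_kV_k)$, and set $\mu_{k+1}=\mu_k$ if $\|V_k\|_{\mathrm F}>\mu_k^2$, $\mu_{k+1}=\theta\mu_k$ if $\|V_k\|_{\mathrm F}\le\mu_k^2$. (With $\bar\mu=0$ the algorithm never stops.) *)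

theory Defs
  imports "HOL-Analysis.Analysis"
begin

(* d x r real matrices are rendered as  real^'r^'d ; the norm / inner product of this
   type are exactly the Frobenius norm / Frobenius inner product. *)

definition stiefel :: "(real^'r^'d) set" where
  "stiefel = {X. transpose X ** X = mat 1}"

definition tangent_space :: "real^'r^'d \<Rightarrow> (real^'r^'d) set" where
  "tangent_space X = {D. transpose X ** D + transpose D ** X = 0}"

definition psd :: "real^'n^'n \<Rightarrow> bool" where
  "psd A \<longleftrightarrow> transpose A = A \<and> (\<forall>x. x \<bullet> (A *v x) \<ge> 0)"

fun Ck :: "nat \<Rightarrow> ('a::euclidean_space \<Rightarrow> 'b::real_normed_vector) \<Rightarrow> bool" where
  "Ck 0 f = continuous_on UNIV f"
| "Ck (Suc k) f = ((\<forall>x. f differentiable (at x)) \<and>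
                    (\<forall>v. Ck k (\<lambda>x. frechet_derivative f (at x) v)))"

definition smooth :: "('a::euclidean_space \<Rightarrow> 'b::real_normed_vector) \<Rightarrow> bool" where
  "smooth f \<longleftrightarrow> (\<forall>k. Ck k f)"

definition egrad :: "('a::real_inner \<Rightarrow> real) \<Rightarrow> 'a \<Rightarrow> 'a" where
  "egrad f X = (THE G. (f has_derivative (\<lambda>H. G \<bullet> H)) (at X))"

(* w(X) = 2 rho || (I - X X^T) S ||_F  with S = Sigma^(1/2) *)
definition wfun :: "real \<Rightarrow> real^'d^'d \<Rightarrow> real^'r^'d \<Rightarrow> real" where
  "wfun \<rho> S X = 2 * \<rho> * norm ((mat 1 - X ** transpose X) ** S)"

definition wsmooth :: "real \<Rightarrow> real^'d^'d \<Rightarrow> real^'r^'d \<Rightarrow> real \<Rightarrow> real" where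
  "wsmooth \<rho> S X \<mu> = (if wfun \<rho> S X \<ge> \<mu> * \<rho> then wfun \<rho> S X
                        else (wfun \<rho> S X)\<^sup>2 / (2 * \<mu> * \<rho>) + \<mu> * \<rho> / 2)"

definition is_retraction :: "(real^'r^'d \<Rightarrow> real^'r^'d \<Rightarrow> real^'r^'d) \<Rightarrow> bool" where
  "is_retraction R \<longleftrightarrow>
     smooth (\<lambda>p. R (fst p) (snd p)) \<and>
     (\<forall>X\<in>stiefel. \<forall>V\<in>tangent_space X. R X V \<in> stiefel) \<and>
     (\<forall>X\<in>stiefel. R X 0 = X) \<and>
     (\<forall>X\<in>stiefel. \<exists>D. (R X has_derivative D) (at 0) \<and> (\<forall>V\<in>tangent_space X. D V = V))"

end

theory Submission
  imports Defs
begin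



lemma transpose_add: "transpose (A + B) = transpose A + transpose (B::real^'n^'m)"
  by (simp add: transpose_def vec_eq_iff)

lemma transpose_minus: "transpose (A - B) = transpose A - transpose (B::real^'n^'m)"
  by (simp add: transpose_def vec_eq_iff)

lemma linear_transpose: "linear (transpose :: real^'n^'m \<Rightarrow> real^'m^'n)"
  by (rule linearI) (simp_all add: transpose_add transpose_scalar)

lemma bounded_linear_transpose: "bounded_linear (transpose :: real^'n^'m \<Rightarrow> real^'m^'n)"
  using linear_transpose linear_conv_bounded_linear by blast

lemma matrix_add_rdistrib': "((B + C) ** A) = (B ** A) + (C ** (A::real^'p^'n))"
  by (vector matrix_matrix_mult_def sum.distrib[symmetric] field_simps)

lemma bilinear_mm: "bilinear (\<lambda>(A::real^'n^'m) (B::real^'p^'n). A ** B)"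
  unfolding bilinear_def
  by (auto intro!: linearI simp: matrix_add_ldistrib matrix_add_rdistrib' matrix_scalar_ac scalar_matrix_assoc)

lemma bounded_bilinear_mm: "bounded_bilinear (\<lambda>(A::real^'n^'m) (B::real^'p^'n). A ** B)"
  using bilinear_mm bilinear_conv_bounded_bilinear by blast

lemmas mm_FDERIV = bounded_bilinear.FDERIV[OF bounded_bilinear_mm]
lemmas transpose_FDERIV = bounded_linear.has_derivative[OF bounded_linear_transpose]

lemma continuous_on_mm[continuous_intros]:
  fixes f :: "'a::topological_space \<Rightarrow> real^'n^'m" and g :: "'a \<Rightarrow> real^'p^'n"
  shows "continuous_on A f \<Longrightarrow> continuous_on A g \<Longrightarrow> continuous_on A (\<lambda>x. f x ** g x)"
  using bounded_bilinear.continuous_on[OF bounded_bilinear_mm] by blast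

lemma continuous_on_transpose[continuous_intros]:
  fixes f :: "'a::topological_space \<Rightarrow> real^'n^'m"
  shows "continuous_on A f \<Longrightarrow> continuous_on A (\<lambda>x. transpose (f x))"
  using bounded_linear.continuous_on[OF bounded_linear_transpose] by blast

lemma norm_sq_trace:
  fixes X :: "real^'r^'d"
  shows "(norm X)\<^sup>2 = (\<Sum>j\<in>UNIV. (transpose X ** X)$j$j)"
proof -
  have "(norm X)\<^sup>2 = X \<bullet> X" by (simp add: power2_norm_eq_inner)
  also have "\<dots> = (\<Sum>i\<in>UNIV. \<Sum>j\<in>UNIV. X$i$j * X$i$j)"
    by (simp add: inner_vec_def)
  also have "\<dots> = (\<Sum>j\<in>UNIV. \<Sum>i\<in>UNIV. X$i$j * X$i$j)" by (rule sum.swap)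
  also have "\<dots> = (\<Sum>j\<in>UNIV. (transpose X ** X)$j$j)"
    by (simp add: matrix_matrix_mult_def transpose_def)
  finally show ?thesis .
qed

lemma stiefel_norm: "X \<in> stiefel \<Longrightarrow> (norm (X::real^'r^'d))\<^sup>2 = real CARD('r)"
  by (simp add: norm_sq_trace stiefel_def mat_def)

lemma compact_stiefel: "compact (stiefel :: (real^'r^'d) set)"
unfolding compact_eq_bounded_closed proof
  show "bounded (stiefel :: (real^'r^'d) set)"
    unfolding bounded_iff
  proof (intro exI ballI)
    fix X :: "real^'r^'d" assume "X \<in> stiefel"
    hence "(norm X)\<^sup>2 = real CARD('r)" by (rule stiefel_norm)
    moreover have "0 \<le> (norm X - 1/2)\<^sup>2" by simp
    ultimately show "norm X \<le> real CARD('r) + 1"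
      by (simp add: power2_eq_square algebra_simps)
  qed
next
  show "closed (stiefel :: (real^'r^'d) set)"
    unfolding stiefel_def
    by (intro closed_Collect_eq continuous_intros)
qed




definition hf :: "real \<Rightarrow> real \<Rightarrow> real \<Rightarrow> real" where
  "hf c \<rho> z = (if z \<ge> c\<^sup>2/4 then 2*\<rho>* sqrt z else 2*\<rho>*z/c + c*\<rho>/2)"

definition hf' :: "real \<Rightarrow> real \<Rightarrow> real \<Rightarrow> real" where
  "hf' c \<rho> z = \<rho> / sqrt (max z (c\<^sup>2/4))"

lemma continuous_on_hf'[continuous_intros]:
  assumes "c > 0" "continuous_on A f"
  shows "continuous_on A (\<lambda>x. hf' c \<rho> (f x))"
proof -
  have "\<And>x. max (f x) (c\<^sup>2/4) > 0" using assms(1) by (simp add: less_max_iff_disj)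
  hence "\<And>x. sqrt (max (f x) (c\<^sup>2/4)) \<noteq> 0" by (metis real_sqrt_gt_zero less_irrefl)
  thus ?thesis unfolding hf'_def using assms(2) by (intro continuous_intros) auto
qed

lemma hf_deriv:
  assumes c: "c > 0"
  shows "(hf c \<rho> has_real_derivative hf' c \<rho> z) (at z)"
proof -
  define z0 where "z0 = c\<^sup>2/4"
  have z0: "z0 > 0" using c by (simp add: z0_def)
  have sq0: "sqrt z0 = c/2" using c by (simp add: z0_def real_sqrt_divide)
  have sqrtD: "((\<lambda>z. 2*\<rho>* sqrt z) has_real_derivative \<rho> / sqrt y) (at y)" if "y > 0" for y
    using that by (auto intro!: derivative_eq_intros simp: field_simps)
  have linD: "((\<lambda>z. 2*\<rho>*z/c + c*\<rho>/2) has_real_derivative 2*\<rho>/c) (at y)" for y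
    using c by (auto intro!: derivative_eq_intros)
  consider "z > z0" | "z < z0" | "z = z0" by linarith
  thus ?thesis
  proof cases
    case 1
    have "(hf c \<rho> has_real_derivative \<rho> / sqrt z) (at z)"
    proof (rule has_field_derivative_transform_within_open[where S="{z0<..}"])
      show "((\<lambda>z. 2*\<rho>* sqrt z) has_real_derivative \<rho> / sqrt z) (at z)" using 1 z0 by (intro sqrtD) auto
      show "open {z0<..}" by simp
      show "\<And>x. x \<in> {z0<..} \<Longrightarrow> 2*\<rho>* sqrt x = hf c \<rho> x" by (simp add: hf_def z0_def)
    qed (use 1 z0 in auto)
    thus ?thesis using 1 by (simp add: hf'_def z0_def max_def)
  next
    case 2
    have "(hf c \<rho> has_real_derivative 2*\<rho>/c) (at z)"
    proof (rule has_field_derivative_transform_within_open[OF linD[of z], where S="{..<z0}"])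
      show "open {..<z0}" by simp
      show "\<And>x. x \<in> {..<z0} \<Longrightarrow> 2*\<rho>*x/c + c*\<rho>/2 = hf c \<rho> x" by (simp add: hf_def z0_def)
    qed (use 2 in auto)
    moreover have "hf' c \<rho> z = 2*\<rho>/c"
    proof -
      have "max z (c\<^sup>2/4) = z0" using 2 by (simp add: z0_def)
      thus ?thesis by (simp add: hf'_def sq0)
    qed
    ultimately show ?thesis by simp
  next
    case 3
    have val: "hf c \<rho> z0 = c*\<rho>" using sq0 by (simp add: hf_def z0_def[symmetric])
    have d: "hf' c \<rho> z0 = 2*\<rho>/c" by (simp add: hf'_def z0_def[symmetric] sq0)
    have L: "((\<lambda>y. (hf c \<rho> y - hf c \<rho> z0) / (y - z0)) \<longlongrightarrow> 2*\<rho>/c) (at_left z0)"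
    proof -
      have ev: "\<forall>\<^sub>F y in at_left z0. y \<in> {z0-1<..<z0}" by (rule eventually_at_left_real) simp
      have cz: "c*\<rho> = 2*\<rho>*z0/c + c*\<rho>/2" using c by (simp add: z0_def power2_eq_square field_simps)
      have "\<forall>\<^sub>F y in at_left z0. (hf c \<rho> y - hf c \<rho> z0) / (y - z0) = 2*\<rho>/c"
        using ev
      proof (eventually_elim)
        case (elim y)
        hence "hf c \<rho> y = 2*\<rho>*y/c + c*\<rho>/2" by (simp add: hf_def z0_def)
        hence "hf c \<rho> y - hf c \<rho> z0 = 2*\<rho>/c * (y - z0)"
          using val c by (simp add: algebra_simps diff_divide_distrib add_divide_distrib z0_def power2_eq_square)
        thus ?case using elim by simp
      qed
      thus ?thesis by (rule tendsto_eventually)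
    qed
    have R: "((\<lambda>y. (hf c \<rho> y - hf c \<rho> z0) / (y - z0)) \<longlongrightarrow> 2*\<rho>/c) (at_right z0)"
    proof -
      have "((\<lambda>y. (2*\<rho>* sqrt y - 2*\<rho>* sqrt z0) / (y - z0)) \<longlongrightarrow> \<rho> / sqrt z0) (at z0)"
        using sqrtD[OF z0] by (simp add: has_field_derivative_iff)
      hence "((\<lambda>y. (2*\<rho>* sqrt y - 2*\<rho>* sqrt z0) / (y - z0)) \<longlongrightarrow> 2*\<rho>/c) (at_right z0)"
        using sq0 c by (auto intro: tendsto_mono[OF at_le] simp: field_simps)
      moreover have "\<forall>\<^sub>F y in at_right z0. (2*\<rho>* sqrt y - 2*\<rho>* sqrt z0) / (y - z0) = (hf c \<rho> y - hf c \<rho> z0) / (y - z0)"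
        using eventually_at_right_real[of z0 "z0+1"]
        by (rule eventually_mono) (auto simp: hf_def z0_def)
      ultimately show ?thesis by (rule Lim_transform_eventually)
    qed
    have "((\<lambda>y. (hf c \<rho> y - hf c \<rho> z0) / (y - z0)) \<longlongrightarrow> 2*\<rho>/c) (at z0)"
      using L R by (simp add: filterlim_at_split)
    thus ?thesis using 3 d by (simp add: has_field_derivative_iff)
  qed
qed




lemma mm_deriv[derivative_intros]:
  fixes f :: "'a::real_normed_vector \<Rightarrow> real^'n^'m" and g :: "'a \<Rightarrow> real^'p^'n"
  assumes "(f has_derivative f') (at x within s)" "(g has_derivative g') (at x within s)"
  shows "((\<lambda>x. f x ** g x) has_derivative (\<lambda>h. f x ** g' h + f' h ** g x)) (at x within s)"
  using bounded_bilinear.FDERIV[OF bounded_bilinear_mm assms] by simp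

lemma transpose_deriv[derivative_intros]:
  fixes f :: "'a::real_normed_vector \<Rightarrow> real^'n^'m"
  assumes "(f has_derivative f') (at x within s)"
  shows "((\<lambda>x. transpose (f x)) has_derivative (\<lambda>h. transpose (f' h))) (at x within s)"
  using bounded_linear.has_derivative[OF bounded_linear_transpose assms] by simp

lemma mm_minus_left[simp]: "(- A) ** B = - (A ** (B::real^'p^'n))" for A :: "real^'n^'m"
  by (vector matrix_matrix_mult_def sum_negf)
lemma mm_diff_left: "(A - A') ** B = A ** B - A' ** (B::real^'p^'n)" for A :: "real^'n^'m"
  by (vector matrix_matrix_mult_def sum_subtractf algebra_simps)
lemma mm_add_left: "(A + A') ** B = A ** B + A' ** (B::real^'p^'n)" for A :: "real^'n^'m"
  by (vector matrix_matrix_mult_def sum.distrib algebra_simps)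

definition MM :: "real^'d^'d \<Rightarrow> real^'r^'d \<Rightarrow> real^'d^'d" where
  "MM S Y = (mat 1 - Y ** transpose Y) ** S"
definition dMM :: "real^'d^'d \<Rightarrow> real^'r^'d \<Rightarrow> real^'r^'d \<Rightarrow> real^'d^'d" where
  "dMM S Y H = - ((H ** transpose Y + Y ** transpose H) ** S)"

lemma MM_deriv: "(MM S has_derivative dMM S Y) (at Y)"
proof -
  have "((\<lambda>Y. (mat 1 - Y ** transpose Y) ** S) has_derivative
     (\<lambda>h. (mat 1 - Y ** transpose Y) ** 0 + (0 - (Y ** transpose h + h ** transpose Y)) ** S)) (at Y)"
    by (intro derivative_intros)
  moreover have "(\<lambda>h. (mat 1 - Y ** transpose Y) ** 0 + (0 - (Y ** transpose h + h ** transpose Y)) ** S) = dMM S Y"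
    by (auto simp: dMM_def fun_eq_iff algebra_simps mm_diff_left mm_add_left)
  ultimately show ?thesis unfolding MM_def[abs_def] by simp
qed

lemma wsmooth_eq:
  assumes "c > 0" "\<rho> > 0"
  shows "wsmooth \<rho> S Y c = hf c \<rho> (MM S Y \<bullet> MM S Y)"
proof -
  let ?n = "norm (MM S Y)"
  have w: "wfun \<rho> S Y = 2*\<rho>*?n" by (simp add: wfun_def MM_def)
  have q: "MM S Y \<bullet> MM S Y = ?n\<^sup>2" by (simp add: power2_norm_eq_inner)
  have iff: "(2*\<rho>*?n \<ge> c*\<rho>) = (?n\<^sup>2 \<ge> c\<^sup>2/4)"
  proof -
    have "(2*\<rho>*?n \<ge> c*\<rho>) = (?n \<ge> c/2)" using assms by (auto simp: field_simps)
    also have "\<dots> = ((c/2)\<^sup>2 \<le> ?n\<^sup>2)"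
    proof
      assume "c/2 \<le> ?n" thus "(c/2)\<^sup>2 \<le> ?n\<^sup>2" using assms by (intro power_mono) auto
    next
      assume "(c/2)\<^sup>2 \<le> ?n\<^sup>2" thus "c/2 \<le> ?n" by (rule power2_le_imp_le) simp
    qed
    finally show ?thesis by (simp add: power_divide)
  qed
  show ?thesis
    unfolding wsmooth_def hf_def w q iff
    using assms by (auto simp: power_mult_distrib field_simps power2_eq_square)
qed

definition Dg :: "(real^'r^'d \<Rightarrow> real^'r^'d) \<Rightarrow> real \<Rightarrow> real^'d^'d \<Rightarrow> real \<Rightarrow> real^'r^'d \<Rightarrow> real^'r^'d \<Rightarrow> real" where
  "Dg gu \<rho> S c Y H = gu Y \<bullet> H + hf' c \<rho> (MM S Y \<bullet> MM S Y) * (2 * (MM S Y \<bullet> dMM S Y H))"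

lemma g_deriv:
  assumes c: "c > 0" and rho: "\<rho> > 0"
    and u_grad: "\<And>Y. (u has_derivative (\<lambda>H. gu Y \<bullet> H)) (at Y)"
  shows "((\<lambda>Y. u Y + wsmooth \<rho> S Y c) has_derivative Dg gu \<rho> S c Y) (at Y)"
proof -
  have q: "((\<lambda>Y. MM S Y \<bullet> MM S Y) has_derivative (\<lambda>H. 2 * (MM S Y \<bullet> dMM S Y H))) (at Y)"
  proof -
    have D: "((\<lambda>Y. MM S Y \<bullet> MM S Y) has_derivative (\<lambda>h. MM S Y \<bullet> dMM S Y h + dMM S Y h \<bullet> MM S Y)) (at Y)"
      by (rule has_derivative_inner[OF MM_deriv MM_deriv])
    have "(\<lambda>h. MM S Y \<bullet> dMM S Y h + dMM S Y h \<bullet> MM S Y) = (\<lambda>H. 2 * (MM S Y \<bullet> dMM S Y H))"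
      by (simp add: fun_eq_iff inner_commute)
    thus ?thesis using D by simp
  qed
  have h: "((\<lambda>Y. hf c \<rho> (MM S Y \<bullet> MM S Y)) has_derivative
      (\<lambda>H. hf' c \<rho> (MM S Y \<bullet> MM S Y) * (2 * (MM S Y \<bullet> dMM S Y H)))) (at Y)"
    using diff_chain_at[OF q hf_deriv[OF c, unfolded has_field_derivative_def]]
    by (simp add: o_def mult.commute)
  have "((\<lambda>Y. u Y + hf c \<rho> (MM S Y \<bullet> MM S Y)) has_derivative Dg gu \<rho> S c Y) (at Y)"
    unfolding Dg_def[abs_def] by (intro has_derivative_add u_grad h)
  moreover have "(\<lambda>Y. u Y + wsmooth \<rho> S Y c) = (\<lambda>Y. u Y + hf c \<rho> (MM S Y \<bullet> MM S Y))"
    by (rule ext) (simp add: wsmooth_eq[OF c rho])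
  ultimately show ?thesis by simp
qed

lemma Dg_cont:
  assumes c: "c > 0" and gu: "continuous_on UNIV gu"
  shows "continuous_on UNIV (\<lambda>p. Dg gu \<rho> S c (fst p) (snd p))"
  unfolding Dg_def MM_def dMM_def using c
  by (intro continuous_intros continuous_on_compose2[OF gu]) auto




lemma egrad_eq:
  fixes f :: "'a::euclidean_space \<Rightarrow> real"
  assumes d: "(f has_derivative D) (at X)"
  shows "egrad f X \<bullet> H = D H"
proof -
  have lin: "linear D" using d by (rule has_derivative_linear)
  define G0 where "G0 = (\<Sum>b\<in>Basis. D b *\<^sub>R b)"
  have G0: "G0 \<bullet> H = D H" for H
  proof -
    have "D H = D (\<Sum>b\<in>Basis. (H \<bullet> b) *\<^sub>R b)" by (simp add: euclidean_representation)
    also have "\<dots> = (\<Sum>b\<in>Basis. (H \<bullet> b) * D b)"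
      by (simp add: linear_sum[OF lin] linear_scale[OF lin])
    also have "\<dots> = G0 \<bullet> H" unfolding G0_def inner_sum_left
      by (rule sum.cong) (auto simp: inner_commute)
    finally show ?thesis by simp
  qed
  have DG: "(\<lambda>H. G0 \<bullet> H) = D" using G0 by auto
  have "egrad f X = G0"
    unfolding egrad_def
  proof (rule the_equality)
    show "(f has_derivative (\<lambda>H. G0 \<bullet> H)) (at X)" using d DG by simp
  next
    fix G assume "(f has_derivative (\<lambda>H. G \<bullet> H)) (at X)"
    hence "(\<lambda>H. G \<bullet> H) = D" using d by (rule has_derivative_unique)
    hence "\<forall>H. G \<bullet> H = G0 \<bullet> H" using G0 by metis
    hence "(G - G0) \<bullet> (G - G0) = 0" by (simp add: inner_diff_left)
    thus "G = G0" by simp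
  qed
  thus ?thesis using G0 by simp
qed

lemma mvt_path:
  fixes f :: "real \<Rightarrow> 'b::real_normed_vector"
  assumes der: "\<And>\<tau>. \<tau> \<in> {0..t} \<Longrightarrow> (f has_vector_derivative f' \<tau>) (at \<tau>)"
    and t: "0 \<le> t" and bd: "\<And>\<tau>. \<tau> \<in> {0..t} \<Longrightarrow> norm (f' \<tau> - f' 0) \<le> \<epsilon>"
  shows "norm (f t - f 0 - t *\<^sub>R f' 0) \<le> t * \<epsilon>"
proof -
  have "norm (f t - f 0 - (t - 0) *\<^sub>R f' 0) \<le> norm (t - 0) * \<epsilon>"
  proof (rule vector_differentiable_bound_linearization[where S="{0..t}"])
    show "\<And>x. x \<in> {0..t} \<Longrightarrow> (f has_vector_derivative f' x) (at x within {0..t})"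
      using der by (rule has_vector_derivative_at_within)
    show "closed_segment 0 t \<subseteq> {0..t}" using t by (simp add: closed_segment_eq_real_ivl)
  qed (use bd t in auto)
  thus ?thesis using t by simp
qed

lemma unif_lemma:
  fixes \<Gamma> :: "(('a::euclidean_space) \<times> 'a) \<times> 'a \<Rightarrow> 'b::real_normed_vector"
  assumes cont: "continuous_on UNIV \<Gamma>" and K: "compact K" and e: "e > 0" and B: "B \<ge> 0"
  shows "\<exists>\<delta>>0. \<forall>X\<in>K. \<forall>V. norm V \<le> B \<longrightarrow> (\<forall>\<tau>. 0 \<le> \<tau> \<and> \<tau> \<le> 1 \<and> \<tau> \<le> \<delta> \<longrightarrow>
            norm (\<Gamma> ((X, \<tau> *\<^sub>R V), V) - \<Gamma> ((X, 0), V)) < e)"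
proof -
  define C where "C = (K \<times> cball (0::'a) B) \<times> cball (0::'a) B"
  have "compact C" unfolding C_def by (intro compact_Times K compact_cball)
  hence "uniformly_continuous_on C \<Gamma>"
    by (intro compact_uniformly_continuous continuous_on_subset[OF cont]) simp_all
  then obtain d where d: "d > 0" and dd: "\<And>x x'. x \<in> C \<Longrightarrow> x' \<in> C \<Longrightarrow> dist x' x < d \<Longrightarrow> dist (\<Gamma> x') (\<Gamma> x) < e"
    using e unfolding uniformly_continuous_on_def by metis
  show ?thesis
  proof (intro exI[of _ "d/(B+1)"] conjI allI impI ballI)
    show "d/(B+1) > 0" using d B by simp
  next
    fix X V :: 'a and \<tau> :: real assume X: "X \<in> K" and V: "norm V \<le> B" and tau: "0 \<le> \<tau> \<and> \<tau> \<le> 1 \<and> \<tau> \<le> d/(B+1)"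
    have "\<tau> * norm V \<le> 1 * B" using tau V by (intro mult_mono) auto
    hence in1: "((X, \<tau> *\<^sub>R V), V) \<in> C" using X V tau
      by (auto simp: C_def)
    have in2: "((X, 0), V) \<in> C" using X V B by (auto simp: C_def)
    have "dist ((X, \<tau> *\<^sub>R V), V) ((X, 0), V) = \<tau> * norm V"
      using tau by (simp add: dist_Pair_Pair)
    also have "\<dots> \<le> d/(B+1) * B" using tau V by (intro mult_mono) auto
    also have "\<dots> < d" using d B by (simp add: field_simps)
    finally have "dist (\<Gamma> ((X, \<tau> *\<^sub>R V), V)) (\<Gamma> ((X, 0), V)) < e"
      by (intro dd in1 in2)
    thus "norm (\<Gamma> ((X, \<tau> *\<^sub>R V), V) - \<Gamma> ((X, 0), V)) < e" by (simp add: dist_norm)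
  qed
qed




lemma tangent_scale: "V \<in> tangent_space X \<Longrightarrow> a *\<^sub>R V \<in> tangent_space (X::real^'r^'d)"
  by (simp add: tangent_space_def matrix_scalar_ac transpose_scalar scalar_matrix_assoc[symmetric] scaleR_add_right[symmetric])

lemma tangent_zero: "0 \<in> tangent_space (X::real^'r^'d)"
  by (simp add: tangent_space_def transpose_def zero_vec_def[symmetric])

definition FR :: "(real^'r^'d \<Rightarrow> real^'r^'d \<Rightarrow> real^'r^'d) \<Rightarrow> (real^'r^'d) \<times> (real^'r^'d) \<Rightarrow> real^'r^'d"
  where "FR R p = R (fst p) (snd p)"
definition JF :: "(real^'r^'d \<Rightarrow> real^'r^'d \<Rightarrow> real^'r^'d) \<Rightarrow> (real^'r^'d) \<times> (real^'r^'d) \<Rightarrow> (real^'r^'d) \<times> (real^'r^'d) \<Rightarrow> real^'r^'d"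
  where "JF R p w = frechet_derivative (FR R) (at p) w"

context
  fixes R :: "real^'r^'d \<Rightarrow> real^'r^'d \<Rightarrow> real^'r^'d"
  assumes retr: "is_retraction R"
begin


lemma FR_deriv: "((FR R) has_derivative (JF R) p) (at p)"
proof -
  have "smooth (FR R)" using retr by (simp add: is_retraction_def FR_def[abs_def])
  hence "Ck 1 (FR R)" by (simp add: smooth_def)
  hence "(FR R) differentiable (at p)" by (cases p) simp
  thus ?thesis unfolding JF_def[abs_def] by (simp add: frechet_derivative_works[symmetric])
qed

lemma JF_linear: "linear ((JF R) p)"
  using FR_deriv by (rule has_derivative_linear)

lemma JF_cont: "continuous_on UNIV (\<lambda>x. (JF R) (fst x) (snd x))"
proof -
  have "smooth (FR R)" using retr by (simp add: is_retraction_def FR_def[abs_def])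
  hence "Ck 1 (FR R)" by (simp add: smooth_def)
  hence c: "continuous_on UNIV (\<lambda>p. (JF R) p v)" for v by (cases v) (simp add: JF_def)
  have eq: "(JF R) (fst x) (snd x) = (\<Sum>b\<in>Basis. (snd x \<bullet> b) *\<^sub>R (JF R) (fst x) b)" for x
  proof -
    have "(JF R) (fst x) (snd x) = (JF R) (fst x) (\<Sum>b\<in>Basis. (snd x \<bullet> b) *\<^sub>R b)" by (simp add: euclidean_representation)
    also have "\<dots> = (\<Sum>b\<in>Basis. (snd x \<bullet> b) *\<^sub>R (JF R) (fst x) b)"
      by (simp add: linear_sum[OF JF_linear] linear_scale[OF JF_linear])
    finally show ?thesis .
  qed
  show ?thesis unfolding eq
    by (intro continuous_intros continuous_on_compose2[OF c]) auto
qed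

lemma FR_cont: "continuous_on UNIV (FR R)"
  using FR_deriv by (meson continuous_at_imp_continuous_on has_derivative_continuous)

lemma FR_stiefel: "X \<in> stiefel \<Longrightarrow> V \<in> tangent_space X \<Longrightarrow> (FR R) (X, V) \<in> stiefel"
  using retr by (simp add: is_retraction_def FR_def)

lemma FR_zero: "X \<in> stiefel \<Longrightarrow> (FR R) (X, 0) = X"
  using retr by (simp add: is_retraction_def FR_def)

lemma JF_tangent:
  assumes X: "X \<in> stiefel" and V: "V \<in> tangent_space X"
  shows "(JF R) (X, 0) (0, V) = V"
proof -
  obtain D where D: "(R X has_derivative D) (at 0)" and DV: "\<forall>V\<in>tangent_space X. D V = V"
    using retr X by (auto simp: is_retraction_def)
  have inner: "((\<lambda>V. (X, V)) has_derivative (\<lambda>h. (0, h))) (at (0::real^'r^'d))"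
    by (auto intro!: derivative_eq_intros)
  have "((\<lambda>V. (FR R) (X, V)) has_derivative (\<lambda>h. (JF R) (X, 0) (0, h))) (at 0)"
    using diff_chain_at[OF inner FR_deriv[of "(X, 0)"]] by (simp add: o_def)
  hence "(R X has_derivative (\<lambda>h. (JF R) (X, 0) (0, h))) (at 0)" by (simp add: FR_def)
  hence "D = (\<lambda>h. (JF R) (X, 0) (0, h))" using D by (rule has_derivative_unique[rotated])
  thus ?thesis using DV V by metis
qed

lemma path_deriv:
  "((\<lambda>\<tau>. (FR R) (X, \<tau> *\<^sub>R V)) has_vector_derivative (JF R) (X, \<tau> *\<^sub>R V) (0, V)) (at \<tau>)"
proof -
  have inner: "((\<lambda>\<tau>. (X, \<tau> *\<^sub>R V)) has_derivative (\<lambda>h. (0, h *\<^sub>R V))) (at \<tau>)"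
    by (auto intro!: derivative_eq_intros)
  have "((\<lambda>\<tau>. (FR R) (X, \<tau> *\<^sub>R V)) has_derivative (\<lambda>h. (JF R) (X, \<tau> *\<^sub>R V) (0, h *\<^sub>R V))) (at \<tau>)"
    using diff_chain_at[OF inner FR_deriv] by (simp add: o_def)
  moreover have "(\<lambda>h. (JF R) (X, \<tau> *\<^sub>R V) (0, h *\<^sub>R V)) = (\<lambda>h. h *\<^sub>R (JF R) (X, \<tau> *\<^sub>R V) (0, V))"
    using linear_scale[OF JF_linear, symmetric] by simp
  ultimately show ?thesis by (simp add: has_vector_derivative_def)
qed

end




lemma lip_cont:
  fixes f :: "'a::real_normed_vector \<Rightarrow> 'b::real_normed_vector"
  assumes "\<And>Y Z. norm (f Y - f Z) \<le> L * norm (Y - Z)"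
  shows "continuous_on UNIV f"
  unfolding continuous_on_iff
proof (intro ballI allI impI)
  fix x and e :: real assume "e > 0"
  show "\<exists>d>0. \<forall>x'\<in>UNIV. dist x' x < d \<longrightarrow> dist (f x') (f x) < e"
  proof (intro exI[of _ "e/(\<bar>L\<bar>+1)"] conjI ballI impI)
    show "e/(\<bar>L\<bar>+1) > 0" using \<open>e>0\<close> by simp
  next
    fix x' assume d: "dist x' x < e/(\<bar>L\<bar>+1)"
    have "dist (f x') (f x) \<le> \<bar>L\<bar> * dist x' x"
      using assms[of x' x] by (simp add: dist_norm) (meson abs_ge_self mult_right_mono norm_ge_zero order_trans)
    also have "\<dots> \<le> \<bar>L\<bar> * (e/(\<bar>L\<bar>+1))" using d by (intro mult_left_mono) auto
    also have "\<dots> < e" using \<open>e>0\<close> by (simp add: field_simps)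
    finally show "dist (f x') (f x) < e" .
  qed
qed

lemma tail_part:
  fixes \<mu> :: "nat \<Rightarrow> real" and P :: "nat \<Rightarrow> bool"
  assumes pos: "\<And>k. \<mu> k > 0" and theta: "0 < \<theta>" "\<theta> < 1"
    and next_: "\<And>k. \<mu> (Suc k) = (if P k then \<mu> k else \<theta> * \<mu> k)"
    and inf: "infinite {k. \<not> P k}"
  shows "decseq \<mu> \<and> \<mu> \<longlonglongrightarrow> 0"
proof -
  have dec: "decseq \<mu>"
  proof (rule decseq_SucI)
    fix k show "\<mu> (Suc k) \<le> \<mu> k" using pos[of k] theta by (simp add: next_ mult_left_le_one_le less_imp_le)
  qed
  obtain L where L: "\<mu> \<longlonglongrightarrow> L" and Lle: "\<forall>i. L \<le> \<mu> i"
    using decseq_convergent[OF dec, of 0] pos less_imp_le by blast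
  have L0: "L \<ge> 0" using L pos by (intro LIMSEQ_le_const) (auto intro: less_imp_le)
  have "L = 0"
  proof (rule ccontr)
    assume "L \<noteq> 0" hence Lp: "L > 0" using L0 by simp
    have "(\<lambda>k. \<mu> (Suc k) - \<theta> * \<mu> k) \<longlonglongrightarrow> L - \<theta> * L"
      by (intro tendsto_intros LIMSEQ_Suc L)
    moreover have "L - \<theta> * L > 0" using Lp theta by simp
    ultimately have "eventually (\<lambda>k. \<mu> (Suc k) - \<theta> * \<mu> k > 0) sequentially"
      by (rule order_tendstoD)
    then obtain N where N: "\<And>k. k \<ge> N \<Longrightarrow> \<mu> (Suc k) - \<theta> * \<mu> k > 0"
      by (auto simp: eventually_sequentially)
    have "{k. \<not> P k} \<subseteq> {..<N}"
    proof
      fix k assume "k \<in> {k. \<not> P k}"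
      hence "\<mu> (Suc k) = \<theta> * \<mu> k" by (simp add: next_)
      thus "k \<in> {..<N}" using N[of k] by (cases "k \<ge> N") auto
    qed
    thus False using inf finite_subset by blast
  qed
  thus ?thesis using dec L by simp
qed




theorem mainTheorem11:
  fixes u s :: "real^'r^'d \<Rightarrow> real"
    and gu :: "real^'r^'d \<Rightarrow> real^'r^'d"
    and Sigma S :: "real^'d^'d"
    and R :: "real^'r^'d \<Rightarrow> real^'r^'d \<Rightarrow> real^'r^'d"
    and Lu Ls \<rho> \<theta> \<beta> :: real
    and X V :: "nat \<Rightarrow> real^'r^'d"
    and \<mu> \<alpha> :: "nat \<Rightarrow> real"
    and m :: "nat \<Rightarrow> nat"
  defines "gt \<equiv> (\<lambda>Y t. u Y + wsmooth \<rho> S Y t)"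
    and "ft \<equiv> (\<lambda>Y t. u Y + wsmooth \<rho> S Y t + s Y)"
  assumes dims: "CARD('r) < CARD('d)"
    and u_grad: "\<And>Y. (u has_derivative (\<lambda>H. gu Y \<bullet> H)) (at Y)"
    and u_lip: "\<And>Y Z. norm (gu Y - gu Z) \<le> Lu * norm (Y - Z)"
    and s_convex: "convex_on UNIV s"
    and s_lip: "\<And>Y Z. \<bar>s Y - s Z\<bar> \<le> Ls * norm (Y - Z)"
    and Sigma_psd: "psd Sigma"
    and S_sqrt: "psd S" "S ** S = Sigma"
    and rho_pos: "\<rho> > 0"
    and retr: "is_retraction R"
    and X0: "X 0 \<in> stiefel"
    and mu0: "\<mu> 0 > 0"
    and theta: "0 < \<theta>" "\<theta> < 1"
    and beta: "0 < \<beta>" "\<beta> < 1"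
    and V_tan: "\<And>k. V k \<in> tangent_space (X k)"
    and V_min: "\<And>k W. W \<in> tangent_space (X k) \<Longrightarrow>
         egrad (\<lambda>Y. gt Y (\<mu> k)) (X k) \<bullet> V k + (1 / (2 * \<mu> k)) * (norm (V k))\<^sup>2 + s (X k + V k)
       \<le> egrad (\<lambda>Y. gt Y (\<mu> k)) (X k) \<bullet> W + (1 / (2 * \<mu> k)) * (norm W)\<^sup>2 + s (X k + W)"
    and ls_ok: "\<And>k. ft (R (X k) (\<beta> ^ m k *\<^sub>R V k)) (\<mu> k)
                   \<le> ft (X k) (\<mu> k) - \<beta> ^ m k / (2 * \<mu> k) * (norm (V k))\<^sup>2"
    and ls_least: "\<And>k j. j < m k \<Longrightarrow> \<not> (ft (R (X k) (\<beta> ^ j *\<^sub>R V k)) (\<mu> k)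
                   \<le> ft (X k) (\<mu> k) - \<beta> ^ j / (2 * \<mu> k) * (norm (V k))\<^sup>2)"
    and alpha: "\<And>k. \<alpha> k = \<beta> ^ m k"
    and X_next: "\<And>k. X (Suc k) = R (X k) (\<alpha> k *\<^sub>R V k)"
    and mu_next: "\<And>k. \<mu> (Suc k) = (if norm (V k) > (\<mu> k)\<^sup>2 then \<mu> k else \<theta> * \<mu> k)"
  shows "infinite {k. norm (V k) \<le> (\<mu> k)\<^sup>2} \<and> decseq \<mu> \<and> \<mu> \<longlonglongrightarrow> 0"
proof -
  have ftg: "\<And>Y t. ft Y t = gt Y t + s Y" by (simp add: ft_def gt_def)
  have mupos: "\<mu> k > 0" for k
    by (induction k) (use mu0 theta in \<open>auto simp: mu_next\<close>)
  have Xst: "X k \<in> stiefel" for k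
  proof (induction k)
    case 0 show ?case by (rule X0)
  next
    case (Suc k)
    have "X (Suc k) = FR R (X k, \<alpha> k *\<^sub>R V k)" by (simp add: X_next FR_def)
    thus ?case using FR_stiefel[OF retr Suc tangent_scale[OF V_tan]] by simp
  qed
  have infK: "infinite {k. norm (V k) \<le> (\<mu> k)\<^sup>2}"
  proof
    assume fin: "finite {k. norm (V k) \<le> (\<mu> k)\<^sup>2}"
    obtain N where N: "{k. norm (V k) \<le> (\<mu> k)\<^sup>2} \<subseteq> {..<N}"
      using finite_nat_bounded[OF fin] by blast
    have big: "norm (V k) > (\<mu> k)\<^sup>2" if "k \<ge> N" for k
    proof (rule ccontr)
      assume "\<not> ?thesis"
      hence "k \<in> {k. norm (V k) \<le> (\<mu> k)\<^sup>2}" by simp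
      with N have "k < N" by auto
      with that show False by simp
    qed
    define c where "c = \<mu> N"
    have cpos: "c > 0" using mupos by (simp add: c_def)
    have muc: "\<mu> k = c" if "k \<ge> N" for k
      using that
    proof (induction k rule: dec_induct)
      case base show ?case by (simp add: c_def)
    next
      case (step k) thus ?case using big[OF step.hyps(1)] by (simp add: mu_next)
    qed
    define g where "g = (\<lambda>Y. gt Y c)"
    define D where "D = Dg gu \<rho> S c"
    have gD: "(g has_derivative D Y) (at Y)" for Y
      unfolding g_def gt_def D_def using g_deriv[OF cpos rho_pos u_grad] by simp
    have egr: "egrad (\<lambda>Y. gt Y (\<mu> k)) (X k) \<bullet> W = D (X k) W" if "k \<ge> N" for k W
      using egrad_eq[OF gD] muc[OF that] by (simp add: g_def)
    have Dlin: "linear (D Y)" for Y using gD by (rule has_derivative_linear)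
    have gucont: "continuous_on UNIV gu" using u_lip by (rule lip_cont)
    have Dcont: "continuous_on UNIV (\<lambda>p. D (fst p) (snd p))"
      unfolding D_def by (rule Dg_cont[OF cpos gucont])
    have scont: "continuous_on UNIV s" by (rule lip_cont[of s Ls]) (use s_lip in simp)
    have ucont: "continuous_on UNIV u"
      using u_grad by (meson continuous_at_imp_continuous_on has_derivative_continuous)
    have wpos: "wsmooth \<rho> S Y c \<ge> 0" for Y
      using cpos rho_pos by (auto simp: wsmooth_def wfun_def)
    have sne: "(stiefel :: (real^('r::finite)^('d::finite)) set) \<noteq> {}" using X0 by auto
    obtain Y0 where "Y0 \<in> stiefel" and Y0: "\<forall>Y\<in>stiefel. u Y0 + s Y0 \<le> u Y + s Y"
      using continuous_attains_inf[OF compact_stiefel sne continuous_on_add[OF continuous_on_subset[OF ucont] continuous_on_subset[OF scont]]] X0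
      by blast
    define Lb where "Lb = u Y0 + s Y0"
    have ftlb: "ft Y c \<ge> Lb" if "Y \<in> stiefel" for Y
      using Y0 that wpos[of Y] by (auto simp: Lb_def ft_def)
    have ne: "(stiefel :: (real^('r::finite)^('d::finite)) set) \<times> cball (0::real^('r::finite)^('d::finite)) 1 \<noteq> {}" using X0 by auto
    have cc: "continuous_on (stiefel \<times> cball (0::real^('r::finite)^('d::finite)) 1) (\<lambda>p. \<bar>D (fst p) (snd p)\<bar>)"
      by (intro continuous_on_rabs continuous_on_subset[OF Dcont]) simp
    obtain p0 where "p0 \<in> stiefel \<times> cball (0::real^('r::finite)^('d::finite)) 1" and p0: "\<forall>p\<in>stiefel \<times> cball (0::real^('r::finite)^('d::finite)) 1. \<bar>D (fst p) (snd p)\<bar> \<le> \<bar>D (fst p0) (snd p0)\<bar>"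
      using continuous_attains_sup[OF compact_Times[OF compact_stiefel compact_cball] ne cc] by blast
    define M where "M = \<bar>D (fst p0) (snd p0)\<bar>"
    have M: "\<bar>D Y W\<bar> \<le> M" if "Y \<in> stiefel" "norm W \<le> 1" for Y W
      using p0 that by (force simp: M_def)
    have M0: "M \<ge> 0" by (simp add: M_def)
    have Mb: "\<bar>D Y W\<bar> \<le> M * norm W" if Y: "Y \<in> stiefel" for Y W
    proof (cases "W = 0")
      case True thus ?thesis using linear_0[OF Dlin] by simp
    next
      case False
      have "D Y W = norm W * D Y (W /\<^sub>R norm W)"
        using False linear_scale[OF Dlin, of Y "norm W" "W /\<^sub>R norm W"] by simp
      moreover have "\<bar>D Y (W /\<^sub>R norm W)\<bar> \<le> M" using False by (intro M Y) simp
      ultimately have "\<bar>D Y W\<bar> = norm W * \<bar>D Y (W /\<^sub>R norm W)\<bar>" by (simp add: abs_mult)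
      also have "\<dots> \<le> norm W * M" using \<open>\<bar>D Y (W /\<^sub>R norm W)\<bar> \<le> M\<close> by (intro mult_left_mono) auto
      finally show ?thesis by (simp add: mult.commute)
    qed
    define B where "B = 2*c*(M + \<bar>Ls\<bar>)"
    have B0: "B \<ge> 0" using cpos M0 by (simp add: B_def)
    have slip: "s Y - s Z \<le> \<bar>Ls\<bar> * norm (Y - Z)" for Y Z
    proof -
      have "Ls * norm (Y - Z) \<le> \<bar>Ls\<bar> * norm (Y - Z)" by (intro mult_right_mono) auto
      thus ?thesis using s_lip[of Y Z] by linarith
    qed
    have Vmin0: "D (X k) (V k) + (1/(2*c)) * (norm (V k))\<^sup>2 + s (X k + V k) \<le> s (X k)" if "k \<ge> N" for k
      using V_min[OF tangent_zero, of k] egr[OF that] muc[OF that] by simp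
    have Vb: "norm (V k) \<le> B" if k: "k \<ge> N" for k
    proof (cases "V k = 0")
      case True thus ?thesis using B0 by simp
    next
      case False
      hence nv: "norm (V k) > 0" by simp
      have "(1/(2*c)) * (norm (V k))\<^sup>2 \<le> s (X k) - s (X k + V k) - D (X k) (V k)"
        using Vmin0[OF k] by simp
      also have "\<dots> \<le> \<bar>Ls\<bar> * norm (V k) + M * norm (V k)"
        using slip[of "X k" "X k + V k"] Mb[OF Xst, of k "V k"] by simp
      finally have "(1/(2*c)) * (norm (V k) * norm (V k)) \<le> (\<bar>Ls\<bar> + M) * norm (V k)"
        by (simp add: power2_eq_square algebra_simps)
      hence "((1/(2*c)) * norm (V k)) * norm (V k) \<le> (\<bar>Ls\<bar> + M) * norm (V k)"
        by (simp add: mult.assoc)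
      hence "(1/(2*c)) * norm (V k) \<le> (\<bar>Ls\<bar> + M)" using nv
        by (rule mult_right_le_imp_le)
      thus ?thesis using cpos by (simp add: B_def field_simps)
    qed
    have sconv: "s (X + t *\<^sub>R V) \<le> (1 - t) * s X + t * s (X + V)" if "0 \<le> t" "t \<le> 1" for X V t
    proof -
      have "s ((1 - t) *\<^sub>R X + t *\<^sub>R (X + V)) \<le> (1 - t) * s X + t * s (X + V)"
        using convex_onD[OF s_convex] that by simp
      moreover have "(1 - t) *\<^sub>R X + t *\<^sub>R (X + V) = X + t *\<^sub>R V" by (simp add: algebra_simps)
      ultimately show ?thesis by simp
    qed
    have strong: "D (X k) (V k) + s (X k + V k) - s (X k) \<le> -(3/4) * ((norm (V k))\<^sup>2 / c)" if k: "k \<ge> N" for k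
    proof -
      have h: "(1/2) *\<^sub>R V k \<in> tangent_space (X k)" by (rule tangent_scale[OF V_tan])
      have A: "D (X k) (V k) + (1/(2*c)) * (norm (V k))\<^sup>2 + s (X k + V k)
          \<le> (1/2) * D (X k) (V k) + (1/(2*c)) * (norm ((1/2) *\<^sub>R V k))\<^sup>2 + s (X k + (1/2) *\<^sub>R V k)"
        using V_min[OF h] egr[OF k] muc[OF k] by simp
      have Dh: "D (X k) ((1/2) *\<^sub>R V k) = (1/2) * D (X k) (V k)"
        using linear_scale[OF Dlin] by simp
      have nh: "(1/(2*c)) * (norm ((1/2) *\<^sub>R V k))\<^sup>2 = (1/8) * ((norm (V k))\<^sup>2 / c)"
        by (simp add: power2_eq_square)
      have sh: "s (X k + (1/2) *\<^sub>R V k) \<le> (1/2) * s (X k) + (1/2) * s (X k + V k)"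
        using sconv[of "1/2" "X k" "V k"] by simp
      have n1: "(1/(2*c)) * (norm (V k))\<^sup>2 = (1/2) * ((norm (V k))\<^sup>2 / c)" by simp
      show ?thesis using A sh unfolding nh n1 by linarith
    qed
    define \<epsilon> where "\<epsilon> = c^3 / (4 * (1 + \<bar>Ls\<bar>))"
    have eps: "\<epsilon> > 0" using cpos by (simp add: \<epsilon>_def)
    have GRc: "continuous_on UNIV (\<lambda>x::((real^('r::finite)^('d::finite)) \<times> (real^('r::finite)^('d::finite))) \<times> (real^('r::finite)^('d::finite)). JF R (fst x) (0, snd x))"
    proof -
      have "continuous_on UNIV ((\<lambda>y. JF R (fst y) (snd y)) \<circ> (\<lambda>x::((real^('r::finite)^('d::finite)) \<times> (real^('r::finite)^('d::finite))) \<times> (real^('r::finite)^('d::finite)). (fst x, (0::real^('r::finite)^('d::finite), snd x))))"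
        by (rule continuous_on_compose[OF _ continuous_on_subset[OF JF_cont[OF retr]]]) (auto intro!: continuous_intros)
      thus ?thesis by (simp add: o_def)
    qed
    have FRc: "continuous_on UNIV (\<lambda>x::((real^('r::finite)^('d::finite)) \<times> (real^('r::finite)^('d::finite))) \<times> (real^('r::finite)^('d::finite)). FR R (fst x))"
    proof -
      have "continuous_on UNIV (FR R \<circ> (\<lambda>x::((real^('r::finite)^('d::finite)) \<times> (real^('r::finite)^('d::finite))) \<times> (real^('r::finite)^('d::finite)). fst x))"
        by (rule continuous_on_compose[OF _ continuous_on_subset[OF FR_cont[OF retr]]]) (auto intro!: continuous_intros)
      thus ?thesis by (simp add: o_def)
    qed
    have Ggc: "continuous_on UNIV (\<lambda>x::((real^('r::finite)^('d::finite)) \<times> (real^('r::finite)^('d::finite))) \<times> (real^('r::finite)^('d::finite)). D (FR R (fst x)) (JF R (fst x) (0, snd x)))"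
    proof -
      have "continuous_on UNIV ((\<lambda>y. D (fst y) (snd y)) \<circ> (\<lambda>x::((real^('r::finite)^('d::finite)) \<times> (real^('r::finite)^('d::finite))) \<times> (real^('r::finite)^('d::finite)). (FR R (fst x), JF R (fst x) (0, snd x))))"
        by (rule continuous_on_compose[OF _ continuous_on_subset[OF Dcont]]) (auto intro!: continuous_on_Pair FRc GRc)
      thus ?thesis by (simp add: o_def)
    qed
    obtain \<delta>1 where d1: "\<delta>1 > 0" and d1b: "\<forall>Y\<in>stiefel. \<forall>W. norm W \<le> B \<longrightarrow> (\<forall>\<tau>. 0 \<le> \<tau> \<and> \<tau> \<le> 1 \<and> \<tau> \<le> \<delta>1 \<longrightarrow>
            norm (JF R (Y, \<tau> *\<^sub>R W) (0, W) - JF R (Y, 0) (0, W)) < \<epsilon>)"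
      using unif_lemma[OF GRc compact_stiefel eps B0] by auto
    obtain \<delta>2 where d2: "\<delta>2 > 0" and d2b: "\<forall>Y\<in>stiefel. \<forall>W. norm W \<le> B \<longrightarrow> (\<forall>\<tau>. 0 \<le> \<tau> \<and> \<tau> \<le> 1 \<and> \<tau> \<le> \<delta>2 \<longrightarrow>
            norm (D (FR R (Y, \<tau> *\<^sub>R W)) (JF R (Y, \<tau> *\<^sub>R W) (0, W)) - D (FR R (Y, 0)) (JF R (Y, 0) (0, W))) < \<epsilon>)"
      using unif_lemma[OF Ggc compact_stiefel eps B0] by auto
    define \<delta> where "\<delta> = min (min \<delta>1 \<delta>2) 1"
    have d0: "\<delta> > 0" "\<delta> \<le> 1" using d1 d2 by (auto simp: \<delta>_def)
    have key: False if k: "k \<ge> N" and t: "0 < t" "t \<le> \<delta>" and nls: "\<not> (ft (R (X k) (t *\<^sub>R V k)) c \<le> ft (X k) c - t / (2 * c) * (norm (V k))\<^sup>2)" for k t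
    proof -
      let ?X = "X k" and ?V = "V k"
      let ?n = "(norm ?V)\<^sup>2"
      have Xk: "?X \<in> stiefel" by (rule Xst)
      have Vk: "norm ?V \<le> B" by (rule Vb[OF k])
      have tan: "?V \<in> tangent_space ?X" by (rule V_tan)
      have t1: "t \<le> 1" using t d0 by simp
      have Rest: "norm (R ?X (t *\<^sub>R ?V) - ?X - t *\<^sub>R ?V) \<le> t * \<epsilon>"
      proof -
        have "norm (FR R (?X, t *\<^sub>R ?V) - FR R (?X, 0 *\<^sub>R ?V) - t *\<^sub>R JF R (?X, 0 *\<^sub>R ?V) (0, ?V)) \<le> t * \<epsilon>"
        proof (rule mvt_path[where f="\<lambda>\<tau>. FR R (?X, \<tau> *\<^sub>R ?V)"])
          show "\<And>\<tau>. \<tau> \<in> {0..t} \<Longrightarrow> ((\<lambda>\<tau>. FR R (?X, \<tau> *\<^sub>R ?V)) has_vector_derivative JF R (?X, \<tau> *\<^sub>R ?V) (0, ?V)) (at \<tau>)"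
            by (rule path_deriv[OF retr])
          show "0 \<le> t" using t by simp
          show "norm (JF R (?X, \<tau> *\<^sub>R ?V) (0, ?V) - JF R (?X, 0 *\<^sub>R ?V) (0, ?V)) \<le> \<epsilon>" if "\<tau> \<in> {0..t}" for \<tau>
            using d1b Xk Vk that t t1 by (auto simp: \<delta>_def intro!: less_imp_le)
        qed
        thus ?thesis using FR_zero[OF retr Xk] JF_tangent[OF retr Xk tan] by (simp add: FR_def)
      qed
      have gest: "g (R ?X (t *\<^sub>R ?V)) - g ?X - t * D ?X ?V \<le> t * \<epsilon>"
      proof -
        have "norm (g (FR R (?X, t *\<^sub>R ?V)) - g (FR R (?X, 0 *\<^sub>R ?V)) - t *\<^sub>R D (FR R (?X, 0 *\<^sub>R ?V)) (JF R (?X, 0 *\<^sub>R ?V) (0, ?V))) \<le> t * \<epsilon>"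
        proof (rule mvt_path[where f="\<lambda>\<tau>. g (FR R (?X, \<tau> *\<^sub>R ?V))"])
          show "((\<lambda>\<tau>. g (FR R (?X, \<tau> *\<^sub>R ?V))) has_vector_derivative D (FR R (?X, \<tau> *\<^sub>R ?V)) (JF R (?X, \<tau> *\<^sub>R ?V) (0, ?V))) (at \<tau>)" for \<tau>
          proof -
            have p: "((\<lambda>\<tau>. FR R (?X, \<tau> *\<^sub>R ?V)) has_derivative (\<lambda>h. h *\<^sub>R JF R (?X, \<tau> *\<^sub>R ?V) (0, ?V))) (at \<tau>)"
              using path_deriv[OF retr] by (simp add: has_vector_derivative_def)
            have "((\<lambda>\<tau>. g (FR R (?X, \<tau> *\<^sub>R ?V))) has_derivative (\<lambda>h. D (FR R (?X, \<tau> *\<^sub>R ?V)) (h *\<^sub>R JF R (?X, \<tau> *\<^sub>R ?V) (0, ?V)))) (at \<tau>)"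
              using diff_chain_at[OF p gD] by (simp add: o_def)
            moreover have "(\<lambda>h. D (FR R (?X, \<tau> *\<^sub>R ?V)) (h *\<^sub>R JF R (?X, \<tau> *\<^sub>R ?V) (0, ?V))) = (\<lambda>h. h *\<^sub>R D (FR R (?X, \<tau> *\<^sub>R ?V)) (JF R (?X, \<tau> *\<^sub>R ?V) (0, ?V)))"
              using linear_scale[OF Dlin] by simp
            ultimately show ?thesis by (simp add: has_vector_derivative_def)
          qed
          show "0 \<le> t" using t by simp
          show "norm (D (FR R (?X, \<tau> *\<^sub>R ?V)) (JF R (?X, \<tau> *\<^sub>R ?V) (0, ?V)) - D (FR R (?X, 0 *\<^sub>R ?V)) (JF R (?X, 0 *\<^sub>R ?V) (0, ?V))) \<le> \<epsilon>" if "\<tau> \<in> {0..t}" for \<tau>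
            using d2b Xk Vk that t t1 by (auto simp: \<delta>_def intro!: less_imp_le)
        qed
        thus ?thesis using FR_zero[OF retr Xk] JF_tangent[OF retr Xk tan] by (simp add: FR_def)
      qed
      have sest: "s (R ?X (t *\<^sub>R ?V)) \<le> (1 - t) * s ?X + t * s (?X + ?V) + \<bar>Ls\<bar> * (t * \<epsilon>)"
      proof -
        have "s (R ?X (t *\<^sub>R ?V)) - s (?X + t *\<^sub>R ?V) \<le> \<bar>Ls\<bar> * norm (R ?X (t *\<^sub>R ?V) - (?X + t *\<^sub>R ?V))"
          by (rule slip)
        also have "\<dots> \<le> \<bar>Ls\<bar> * (t * \<epsilon>)" using Rest by (intro mult_left_mono) (auto simp: algebra_simps)
        finally show ?thesis using sconv[of t ?X ?V] t t1 by simp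
      qed
      have st: "D ?X ?V + s (?X + ?V) - s ?X \<le> -(3/4) * (?n / c)" by (rule strong[OF k])
      have st': "t * (D ?X ?V + s (?X + ?V) - s ?X) \<le> t * (-(3/4) * (?n / c))"
        using st t by (intro mult_left_mono) auto
      have nls': "g (R ?X (t *\<^sub>R ?V)) + s (R ?X (t *\<^sub>R ?V)) > g ?X + s ?X - (1/2) * (t * (?n / c))"
        using nls by (simp add: ftg g_def)
      have epsid: "t * \<epsilon> + \<bar>Ls\<bar> * (t * \<epsilon>) = t * (c^3/4)"
      proof -
        have pos: "1 + \<bar>Ls\<bar> \<noteq> 0" by (metis abs_ge_zero add_pos_nonneg less_irrefl zero_less_one)
        have "\<epsilon> * (1 + \<bar>Ls\<bar>) = c^3/4" unfolding \<epsilon>_def using pos by (simp add: divide_simps)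
        moreover have "t * \<epsilon> + \<bar>Ls\<bar> * (t * \<epsilon>) = t * (\<epsilon> * (1 + \<bar>Ls\<bar>))" by (simp add: algebra_simps)
        ultimately show ?thesis by (simp only:)
      qed
      have st'': "t * D ?X ?V + t * s (?X + ?V) - t * s ?X \<le> -(3/4) * (t * (?n / c))"
        using st' by (simp add: algebra_simps)
      have sest': "s (R ?X (t *\<^sub>R ?V)) \<le> s ?X - t * s ?X + t * s (?X + ?V) + \<bar>Ls\<bar> * (t * \<epsilon>)"
        using sest by (simp add: algebra_simps)
      have gest': "g (R ?X (t *\<^sub>R ?V)) \<le> g ?X + t * D ?X ?V + t * \<epsilon>" using gest by simp
      have "(1/4) * (t * (?n / c)) < t * (c^3/4)"
        using nls' gest' sest' st'' epsid by linarith
      moreover have "t * (c^3/4) = (1/4) * (t * c^3)" by simp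
      ultimately have "(1/4) * (t * (?n / c)) < (1/4) * (t * c^3)" by metis
      hence "t * (?n / c) < t * c^3" using mult_less_cancel_left_pos[of "1/4::real"] by simp
      hence lt: "?n / c < c^3" using t mult_less_cancel_left_pos by blast
      have "norm ?V > c^2" using big[OF k] muc[OF k] by simp
      hence "?n > (c^2)^2" using cpos by (intro power_strict_mono) auto
      hence "(c^2)^2 / c < ?n / c" using cpos by (intro divide_strict_right_mono)
      moreover have "(c^2)^2 / c = c^3" using cpos by (simp add: power2_eq_square power3_eq_cube)
      ultimately show False using lt by linarith
    qed
    define \<eta> where "\<eta> = \<beta> * \<delta>"
    have e1: "\<eta> \<le> \<beta>" unfolding \<eta>_def using beta d0 by (intro mult_left_le) auto
    have eta0: "\<eta> > 0" using beta d0 by (simp add: \<eta>_def)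
    have eta: "\<eta> > 0" "\<eta> < 1" using eta0 e1 beta by linarith+
    have small: "\<exists>k\<ge>N. \<beta> ^ m k < \<eta>"
    proof (rule ccontr)
      assume "\<not> ?thesis"
      hence ge: "\<beta> ^ m k \<ge> \<eta>" if "k \<ge> N" for k using that by (simp add: not_less)
      define dd where "dd = \<eta> * c^3 / 2"
      have dd0: "dd > 0" using eta cpos by (simp add: dd_def)
      have step: "ft (X (Suc k)) c \<le> ft (X k) c - dd" if k: "k \<ge> N" for k
      proof -
        have "ft (X (Suc k)) c \<le> ft (X k) c - \<beta> ^ m k / (2 * c) * (norm (V k))\<^sup>2"
          using ls_ok[of k] muc[OF k] by (simp add: X_next alpha)
        moreover have "\<beta> ^ m k / (2 * c) * (norm (V k))\<^sup>2 \<ge> dd"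
        proof -
          have "norm (V k) > c^2" using big[OF k] muc[OF k] by simp
          hence n4: "(norm (V k))\<^sup>2 \<ge> (c^2)^2" using cpos by (intro power_mono) auto
          have "dd = \<eta> / (2*c) * (c^2)^2" using cpos by (simp add: dd_def field_simps power2_eq_square power3_eq_cube)
          also have "\<dots> \<le> \<beta> ^ m k / (2 * c) * (norm (V k))\<^sup>2"
            using ge[OF k] n4 cpos eta by (intro mult_mono divide_right_mono) auto
          finally show ?thesis .
        qed
        ultimately show ?thesis by simp
      qed
      have iter: "ft (X (N + j)) c \<le> ft (X N) c - real j * dd" for j
      proof (induction j)
        case 0 show ?case by simp
      next
        case (Suc j) thus ?case using step[of "N + j"] by (simp add: algebra_simps)
      qed
      obtain j :: nat where j: "real j > (ft (X N) c - Lb) / dd" using reals_Archimedean2 by blast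
      have "real j * dd > ft (X N) c - Lb" using j dd0 by (simp add: field_simps)
      thus False using iter[of j] ftlb[OF Xst[of "N + j"]] by simp
    qed
    then obtain k where k: "k \<ge> N" and sm: "\<beta> ^ m k < \<eta>" by blast
    have m1: "m k \<noteq> 0" using sm eta by (cases "m k = 0") auto
    define t where "t = \<beta> ^ (m k - 1)"
    have bt: "\<beta> ^ m k = \<beta> * t" using m1 by (simp add: t_def power_eq_if)
    have tpos: "t > 0" using beta by (simp add: t_def)
    have tle: "t \<le> \<delta>" using sm bt beta by (simp add: \<eta>_def)
    have "\<not> (ft (R (X k) (t *\<^sub>R V k)) c \<le> ft (X k) c - t / (2 * c) * (norm (V k))\<^sup>2)"
      using ls_least[of "m k - 1" k] m1 muc[OF k] by (simp add: t_def)
    thus False by (rule key[OF k tpos tle])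
  qed
  have "decseq \<mu> \<and> \<mu> \<longlonglongrightarrow> 0"
    using tail_part[OF mupos theta, where P="\<lambda>k. norm (V k) > (\<mu> k)\<^sup>2"] mu_next infK by (simp add: not_less)
  with infK show ?thesis by simp
qed

end
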